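(* Let $T_b, T_r, S, T_u : \mathbb{N}_{\geq 1} \to \mathbb{R}_{>0}$ satisfy $T_r(n) = T_b(n) + T_r(n-1)$ and $T_u(n) = S(n) + T_u(\lfloor n/2 \rfloor)$ for $n \geq 2$, where $T_b$ and $S$ are each $\Theta(n^{a}(\log n)^{b})$ for some non-negative integers $a,b$. Then $T_u(n)/T_r(n) \to 0$ (super-linear speedup, i.e. $\Theta(T_u) \subsetneq \Theta(T_r)$) if and only if $S(n)/(n\, T_b(n)) \to 0$ (i.e. $\Theta(S) \subsetneq \Theta(n \, T_b)$).
   Context: $T_b(n)$ models the time of the $n$-th recursive step of an original linear recursion, $T_r(n)$ the time of the original recursion with recursion depth $n$, $S(n)=T_c(n)+T_d(n)$ the time of a combined recursive step of the unfolder and meta-interpreter in runtime repeated recursion unfolding, and $T_u(n)$ the total time of runtime repeated recursion unfolding for recursion depth $n$. Asymptotic notation is as $n\to\infty$. *)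

theory Defs
  imports Complex_Main "HOL-Library.Landau_Symbols"
begin

end

theory Submission imports Defs begin

lemma pow_diff_le:
  fixes y z :: real
  assumes "0 \<le> y" "y \<le> z"
  shows "z^m - y^m \<le> real m * z^(m-1) * (z - y)"
proof (induction m)
  case 0 then show ?case by simp
next
  case (Suc m)
  have "z^Suc m - y^Suc m = z * (z^m - y^m) + y^m * (z - y)" by (simp add: algebra_simps)
  also have "\<dots> \<le> z * (real m * z^(m-1) * (z - y)) + z^m * (z - y)"
    using Suc assms by (intro add_mono mult_left_mono mult_right_mono power_mono) auto
  also have "z * (real m * z^(m-1) * (z - y)) = real m * z^m * (z-y)"
    by (cases m) (auto simp: algebra_simps)
  finally show ?case by (simp add: algebra_simps)
qed

lemma h_mono:
  assumes "1 \<le> m" "m \<le> n"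
  shows "real m ^ a * ln (real m) ^ b \<le> real n ^ a * ln (real n) ^ b"
  using assms by (intro mult_mono power_mono) auto

lemma g_diff:
  assumes "2 \<le> n"
  shows "real (Suc n)^(a+1) * ln(real (Suc n))^b - real n^(a+1)*ln(real n)^b
     \<le> real (a+1+b) * (real (Suc n)^a * ln (real (Suc n))^b)"
proof -
  define x where "x = real n"
  define L where "L = ln x"
  define L' where "L' = ln (x+1)"
  have x2: "x \<ge> 2" using assms by (simp add: x_def)
  have L0: "0 \<le> L" using x2 by (simp add: L_def)
  have LL: "L \<le> L'" using x2 by (simp add: L_def L'_def)
  have L1: "1 \<le> L'"
  proof -
    have "exp 1 \<le> x + 1" using exp_le x2 by linarith
    then show ?thesis unfolding L'_def using x2 by (subst ln_ge_iff) auto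
  qed
  have dL: "L' - L \<le> 1/x"
  proof -
    have "1 + 1/x = (x+1)/x" using x2 by (simp add: field_simps)
    then have "L' - L = ln (1 + 1/x)" using x2 unfolding L_def L'_def
      by (simp add: ln_div)
    also have "\<dots> \<le> 1/x" using x2 by (intro ln_add_one_self_le_self) auto
    finally show ?thesis .
  qed
  have P1: "(x+1)^(a+1) - x^(a+1) \<le> real (a+1) * (x+1)^a"
    using pow_diff_le[of x "x+1" "a+1"] x2 by simp
  have P2: "L'^b - L^b \<le> real b * L'^(b-1) * (1/x)"
  proof -
    have "L'^b - L^b \<le> real b * L'^(b-1) * (L' - L)" using pow_diff_le[OF L0 LL] .
    also have "\<dots> \<le> real b * L'^(b-1) * (1/x)"
      using L1 dL by (intro mult_left_mono) auto
    finally show ?thesis .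
  qed
  have "(x+1)^(a+1) * L'^b - x^(a+1) * L^b
      = ((x+1)^(a+1) - x^(a+1)) * L'^b + x^(a+1) * (L'^b - L^b)" by (simp add: algebra_simps)
  also have "\<dots> \<le> real (a+1) * (x+1)^a * L'^b + x^(a+1) * (real b * L'^(b-1) * (1/x))"
    using P1 P2 L1 x2 by (intro add_mono mult_right_mono mult_left_mono) auto
  also have "x^(a+1) * (real b * L'^(b-1) * (1/x)) = real b * (x^a * L'^(b-1))"
    using x2 by (simp add: field_simps)
  also have "x^a * L'^(b-1) \<le> (x+1)^a * L'^b"
  proof (intro mult_mono power_mono)
    show "L'^(b-1) \<le> L'^b" using L1 by (intro power_increasing) auto
  qed (use x2 L1 in auto)
  finally have "(x+1)^(a+1) * L'^b - x^(a+1) * L^b \<le> real (a+1) * (x+1)^a * L'^b + real b * ((x+1)^a * L'^b)"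
    by (simp add: mult_left_mono)
  then show ?thesis unfolding x_def L_def L'_def by (simp add: algebra_simps)
qed

lemma g_half:
  assumes "2 \<le> n"
  shows "real (n div 2)^(a+1) * ln(real (n div 2))^b \<le> real n^(a+1) * ln(real n)^b / 2"
proof -
  have h1: "real (n div 2) \<le> real n / 2" by linarith
  have h0: "1 \<le> real (n div 2)" using assms by simp
  have "real (n div 2)^(a+1) * ln(real (n div 2))^b \<le> (real n / 2)^(a+1) * ln(real n)^b"
    using h1 h0 by (intro mult_mono power_mono) auto
  also have "(real n / 2)^(a+1) \<le> real n^(a+1) / 2"
  proof -
    have "(real n / 2)^(a+1) = real n^(a+1) / 2^(a+1)" by (simp add: power_divide)
    also have "real n^(a+1) / 2^(a+1) \<le> real n^(a+1) / 2"
      by (intro divide_left_mono) (auto simp: self_le_power)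
    finally show ?thesis .
  qed
  then have "(real n / 2)^(a+1) * ln(real n)^b \<le> real n^(a+1) / 2 * ln(real n)^b"
    using assms by (intro mult_right_mono) auto
  finally show ?thesis by simp
qed


lemma g_ge:
  assumes "3 \<le> n"
  shows "real n \<le> real n * (real n ^ a * ln (real n) ^ b)"
proof -
  have "exp 1 \<le> real n" using exp_le assms by linarith
  then have L: "1 \<le> ln (real n)" using assms by (subst ln_ge_iff) auto
  have "1 * 1 \<le> real n ^ a * ln (real n) ^ b"
    using assms L by (intro mult_mono one_le_power) auto
  then show ?thesis using assms by (simp add: mult_le_cancel_left1)
qed

theorem mainTheorem10:
  fixes Tb Tr S Tu :: "nat \<Rightarrow> real"
    and a b c d :: nat
  assumes pos_b: "\<And>n. n \<ge> 1 \<Longrightarrow> Tb n > 0"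
    and pos_r: "\<And>n. n \<ge> 1 \<Longrightarrow> Tr n > 0"
    and pos_S: "\<And>n. n \<ge> 1 \<Longrightarrow> S n > 0"
    and pos_u: "\<And>n. n \<ge> 1 \<Longrightarrow> Tu n > 0"
    and rec_r: "\<And>n. n \<ge> 2 \<Longrightarrow> Tr n = Tb n + Tr (n - 1)"
    and rec_u: "\<And>n. n \<ge> 2 \<Longrightarrow> Tu n = S n + Tu (n div 2)"
    and Tb_Theta: "Tb \<in> \<Theta>(\<lambda>n. real n ^ a * ln (real n) ^ b)"
    and S_Theta: "S \<in> \<Theta>(\<lambda>n. real n ^ c * ln (real n) ^ d)"
  shows "((\<lambda>n. Tu n / Tr n) \<longlonglongrightarrow> 0) \<longleftrightarrow>
         ((\<lambda>n. S n / (real n * Tb n)) \<longlonglongrightarrow> 0)"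
proof -
  define h where "h n = real n ^ a * ln (real n) ^ b" for n
  define g where "g n = real n * h n" for n
  have h_nonneg: "n \<ge> 1 \<Longrightarrow> 0 \<le> h n" for n unfolding h_def by auto
  have hmono: "1 \<le> m \<Longrightarrow> m \<le> n \<Longrightarrow> h m \<le> h n" for m n unfolding h_def by (rule h_mono)
  have gdiff: "2 \<le> n \<Longrightarrow> g (Suc n) - g n \<le> real (a+1+b) * h (Suc n)" for n
    using g_diff[of n a b] unfolding g_def h_def by (simp add: algebra_simps)
  have ghalf: "2 \<le> n \<Longrightarrow> g (n div 2) \<le> g n / 2" for n
    using g_half[of n a b] unfolding g_def h_def by (simp add: algebra_simps)
  have gge: "3 \<le> n \<Longrightarrow> real n \<le> g n" for n
    using g_ge[of n a b] unfolding g_def h_def by simp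
  have g_nonneg: "0 \<le> g n" for n
    unfolding g_def h_def by (cases "n = 0") auto
  have TbO: "Tb \<in> O(h)" and TbOm: "Tb \<in> \<Omega>(h)" using Tb_Theta unfolding h_def[abs_def] by auto
  obtain K where K: "K > 0" "eventually (\<lambda>n. norm (Tb n) \<le> K * norm (h n)) sequentially"
    using landau_o.bigE[OF TbO] by blast
  obtain k0 where k0: "k0 > 0" "eventually (\<lambda>n. norm (Tb n) \<ge> k0 * norm (h n)) sequentially"
    using landau_omega.bigE[OF TbOm] by blast
  obtain N1 where N1: "\<And>n. n \<ge> N1 \<Longrightarrow> norm (Tb n) \<le> K * norm (h n)"
    using K(2) unfolding eventually_sequentially by blast
  obtain N2 where N2: "\<And>n. n \<ge> N2 \<Longrightarrow> norm (Tb n) \<ge> k0 * norm (h n)"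
    using k0(2) unfolding eventually_sequentially by blast
  define N where "N = max (max N1 N2) 3"
  have N3: "N \<ge> 3" unfolding N_def by simp
  have TbU: "n \<ge> N \<Longrightarrow> Tb n \<le> K * h n" for n
    using N1[of n] pos_b[of n] h_nonneg[of n] N3 unfolding N_def by auto
  have TbL: "n \<ge> N \<Longrightarrow> Tb n \<ge> k0 * h n" for n
    using N2[of n] pos_b[of n] h_nonneg[of n] N3 unfolding N_def by auto
  have TrU0: "Tr n \<le> Tr N + K * g n" if "N \<le> n" for n
    using that
  proof (induction n rule: dec_induct)
    case base then show ?case using K g_nonneg[of N] by simp
  next
    case (step n)
    have "Tr (Suc n) = Tb (Suc n) + Tr n" using rec_r[of "Suc n"] N3 step by simp
    also have "\<dots> \<le> K * h (Suc n) + (Tr N + K * g n)" using TbU[of "Suc n"] step by simp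
    also have "\<dots> \<le> Tr N + K * g (Suc n)"
    proof -
      have "h n \<le> h (Suc n)" using hmono[of n "Suc n"] step N3 by simp
      then have "real n * h n \<le> real n * h (Suc n)" by (rule mult_left_mono) simp
      then have "g n + h (Suc n) \<le> g (Suc n)" unfolding g_def
        by (simp add: distrib_right)
      then have "K * (g n + h (Suc n)) \<le> K * g (Suc n)" using K by (intro mult_left_mono) auto
      then show ?thesis by (simp add: distrib_left)
    qed
    finally show ?case .
  qed
  define C1 where "C1 = Tr N + K"
  have TrU: "n \<ge> N \<Longrightarrow> Tr n \<le> C1 * g n" for n
  proof -
    assume n: "n \<ge> N"
    have "1 \<le> g n" using gge[of n] n N3 by simp
    moreover have "Tr N > 0" using pos_r N3 by simp
    ultimately have "Tr N \<le> Tr N * g n" by simp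
    then show ?thesis using TrU0[OF n] unfolding C1_def by (simp add: algebra_simps)
  qed
  have C1pos: "C1 > 0" unfolding C1_def using pos_r[of N] N3 K by simp
  define \<delta> where "\<delta> = min (Tr N / g N) (k0 / real (a+1+b))"
  have gNpos: "g N > 0" using gge[of N] N3 by simp
  have \<delta>pos: "\<delta> > 0" unfolding \<delta>_def using pos_r[of N] N3 gNpos k0 by simp
  have TrL: "\<delta> * g n \<le> Tr n" if "N \<le> n" for n
    using that
  proof (induction n rule: dec_induct)
    case base
    have "\<delta> \<le> Tr N / g N" unfolding \<delta>_def by simp
    then have "\<delta> * g N \<le> Tr N / g N * g N" using gNpos by (intro mult_right_mono) auto
    then show ?case using gNpos by simp
  next
    case (step n)
    have "\<delta> \<le> k0 / real (a+1+b)" unfolding \<delta>_def by simp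
    then have "\<delta> * real (a+1+b) \<le> k0 / real (a+1+b) * real (a+1+b)"
      by (intro mult_right_mono) auto
    then have d2: "\<delta> * real (a+1+b) \<le> k0" by simp
    have hp: "0 \<le> h (Suc n)" using h_nonneg by simp
    have "\<delta> * g (Suc n) \<le> \<delta> * (g n + real (a+1+b) * h (Suc n))"
      using gdiff[of n] step N3 \<delta>pos by (intro mult_left_mono) auto
    also have "\<dots> = \<delta> * g n + (\<delta> * real (a+1+b)) * h (Suc n)" by (simp add: algebra_simps)
    also have "\<dots> \<le> Tr n + k0 * h (Suc n)"
      using step d2 hp by (intro add_mono mult_right_mono) auto
    also have "\<dots> \<le> Tr n + Tb (Suc n)" using TbL[of "Suc n"] step by simp
    also have "\<dots> = Tr (Suc n)" using rec_r[of "Suc n"] N3 step by simp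
    finally show ?case .
  qed
  show ?thesis
  proof
    assume lim: "(\<lambda>n. Tu n / Tr n) \<longlonglongrightarrow> 0"
    show "(\<lambda>n. S n / (real n * Tb n)) \<longlonglongrightarrow> 0"
    proof (rule tendsto_sandwich[of "\<lambda>_. 0" _ _ "\<lambda>n. (C1 / k0) * (Tu n / Tr n)"])
      show "eventually (\<lambda>n. 0 \<le> S n / (real n * Tb n)) sequentially"
        unfolding eventually_sequentially
      proof (intro exI[of _ 1] allI impI)
        fix n :: nat assume "1 \<le> n"
        then have "S n > 0" "real n * Tb n > 0" using pos_S pos_b by auto
        then show "0 \<le> S n / (real n * Tb n)" by simp
      qed
      show "eventually (\<lambda>n. S n / (real n * Tb n) \<le> (C1 / k0) * (Tu n / Tr n)) sequentially"
        unfolding eventually_sequentially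
      proof (intro exI allI impI)
        fix n assume n: "N \<le> n"
        have n1: "n \<ge> 1" "n \<ge> 2" using n N3 by auto
        have gpos: "g n > 0" using gge[of n] n N3 by simp
        have "n div 2 \<ge> 1" using n1 by simp
        then have SU: "S n \<le> Tu n" using rec_u[OF n1(2)] pos_u[of "n div 2"] by simp
        have "real n * (k0 * h n) \<le> real n * Tb n"
          using TbL[OF n] by (intro mult_left_mono) auto
        then have nTb: "k0 * g n \<le> real n * Tb n"
          unfolding g_def by (simp add: mult.left_commute)
        have "S n / (real n * Tb n) \<le> Tu n / (k0 * g n)"
          using SU nTb pos_S[OF n1(1)] k0 gpos by (intro frac_le) auto
        also have "\<dots> \<le> Tu n / (k0 * (Tr n / C1))"
          using TrU[OF n] pos_u[OF n1(1)] pos_r[OF n1(1)] C1pos k0 gpos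
          by (intro divide_left_mono mult_left_mono mult_pos_pos) (auto simp: field_simps)
        also have "\<dots> = (C1 / k0) * (Tu n / Tr n)"
          using C1pos k0 pos_r[OF n1(1)] by (simp add: field_simps)
        finally show "S n / (real n * Tb n) \<le> (C1 / k0) * (Tu n / Tr n)" .
      qed
      show "(\<lambda>n. (C1 / k0) * (Tu n / Tr n)) \<longlonglongrightarrow> 0"
        using tendsto_mult_left_zero[OF lim, of "C1 / k0"] by (simp only: mult.commute)
    qed simp
  next
    assume lim: "(\<lambda>n. S n / (real n * Tb n)) \<longlonglongrightarrow> 0"
    show "(\<lambda>n. Tu n / Tr n) \<longlonglongrightarrow> 0"
    proof (rule LIMSEQ_I)
      fix r :: real assume r: "r > 0"
      define \<epsilon> where "\<epsilon> = r * \<delta> / (4 * K)"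
      have \<epsilon>pos: "\<epsilon> > 0" unfolding \<epsilon>_def using r \<delta>pos K by simp
      obtain M0 where M0: "\<And>n. n \<ge> M0 \<Longrightarrow> norm (S n / (real n * Tb n) - 0) < \<epsilon>"
        using LIMSEQ_D[OF lim \<epsilon>pos] by blast
      define M where "M = max M0 N"
      have SU: "S n \<le> \<epsilon> * K * g n" if "n \<ge> M" for n
      proof -
        have n: "n \<ge> M0" "n \<ge> N" "n \<ge> 1" using that N3 unfolding M_def by auto
        have pos: "real n * Tb n > 0" using pos_b[OF n(3)] n(3) by simp
        have "S n / (real n * Tb n) < \<epsilon>" using M0[OF n(1)] pos_S[OF n(3)] pos by simp
        then have "S n \<le> \<epsilon> * (real n * Tb n)" using pos by (simp add: field_simps)
        also have "\<dots> \<le> \<epsilon> * (real n * (K * h n))"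
          using TbU[OF n(2)] \<epsilon>pos by (intro mult_left_mono) auto
        also have "\<dots> = \<epsilon> * (K * g n)" unfolding g_def by (simp add: mult.left_commute)
        finally show ?thesis by (simp add: algebra_simps)
      qed
      define C where "C = Max (Tu ` {1..M})"
      have TuB: "n \<ge> 1 \<Longrightarrow> Tu n \<le> C + 2 * \<epsilon> * K * g n" for n
      proof (induction n rule: less_induct)
        case (less n)
        show ?case
        proof (cases "n \<le> M")
          case True
          then have "Tu n \<le> C" unfolding C_def using less.prems by (intro Max_ge) auto
          moreover have "0 \<le> 2 * \<epsilon> * K * g n" using \<epsilon>pos K g_nonneg by simp
          ultimately show ?thesis by linarith
        next
          case False
          then have n: "n \<ge> M" "n \<ge> 2" "n div 2 \<ge> 1" "n div 2 < n"
            using N3 unfolding M_def by auto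
          have "Tu n = S n + Tu (n div 2)" using rec_u[OF n(2)] .
          also have "\<dots> \<le> \<epsilon> * K * g n + (C + 2 * \<epsilon> * K * g (n div 2))"
            using SU[OF n(1)] less.IH[OF n(4) n(3)] by simp
          also have "2 * \<epsilon> * K * g (n div 2) \<le> \<epsilon> * K * g n"
            using ghalf[OF n(2)] \<epsilon>pos K by (simp add: field_simps)
          finally show ?thesis by (simp add: algebra_simps)
        qed
      qed
      define M' where "M' = max M (nat \<lceil>2 * \<bar>C\<bar> / (\<delta> * r)\<rceil> + 1)"
      show "\<exists>no. \<forall>n\<ge>no. norm (Tu n / Tr n - 0) < r"
      proof (intro exI allI impI)
        fix n assume n: "M' \<le> n"
        have nN: "n \<ge> N" "n \<ge> 1" using n N3 unfolding M'_def M_def by auto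
        have gpos: "g n > 0" using gge[of n] nN N3 by simp
        have big: "2 * \<bar>C\<bar> / (\<delta> * r) < g n"
        proof -
          have "2 * \<bar>C\<bar> / (\<delta> * r) < real n" using n unfolding M'_def by linarith
          then show ?thesis using gge[of n] nN N3 by simp
        qed
        have Trp: "Tr n > 0" using pos_r nN by simp
        have "Tu n / Tr n \<le> (C + 2 * \<epsilon> * K * g n) / (\<delta> * g n)"
          using TuB[OF nN(2)] TrL[OF nN(1)] pos_u[OF nN(2)] \<delta>pos gpos
          by (intro frac_le) auto
        also have "\<dots> = C / (\<delta> * g n) + r / 2"
          using \<delta>pos gpos K unfolding \<epsilon>_def by (simp add: field_simps)
        also have "C / (\<delta> * g n) < r / 2"
        proof -
          have "2 * \<bar>C\<bar> < g n * (\<delta> * r)" using big \<delta>pos r by (simp add: field_simps)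
          then show ?thesis using \<delta>pos gpos r by (simp add: field_simps)
        qed
        finally have "Tu n / Tr n < r" by simp
        moreover have "Tu n / Tr n > 0" using pos_u[OF nN(2)] Trp by simp
        ultimately show "norm (Tu n / Tr n - 0) < r" by simp
      qed
    qed
  qed
qed

end
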